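(* Let $\psi_2$ be a finite pruned graph without half-loops such that every connected component of $\psi_2$ has positive order, and let $\psi_1$ be a proper subgraph of $\psi_2$. Then $\mathrm{ord}(\psi_1)<\mathrm{ord}(\psi_2)$.
   Context: Graphs may have multiple edges and whole-loops. The order of a graph is $\mathrm{ord}(\psi)=|E_\psi|-|V_\psi|$, with $E_\psi$ the undirected edges. A graph is pruned if every vertex has degree at least two (degree = number of directed edges with that tail; a whole-loop contributes two). *)

theory Defs
  imports Main
begin

text \<open>A graph in the sense of Serre: vertex set, set of directed edges (darts),
  a tail map and an involution (reversal) on the darts.  Undirected edges are the orbits of the involution.\<close>

record ('v, 'd) graph =
  verts :: "'v set"
  darts :: "'d set"
  tl :: "'d \<Rightarrow> 'v"
  rv :: "'d \<Rightarrow> 'd"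

definition is_graph :: "('v, 'd) graph \<Rightarrow> bool" where
  "is_graph G \<longleftrightarrow> tl G ` darts G \<subseteq> verts G \<and> rv G ` darts G \<subseteq> darts G
     \<and> (\<forall>d\<in>darts G. rv G (rv G d) = d)"

definition finite_graph :: "('v, 'd) graph \<Rightarrow> bool" where
  "finite_graph G \<longleftrightarrow> finite (verts G) \<and> finite (darts G)"

definition hd :: "('v, 'd) graph \<Rightarrow> 'd \<Rightarrow> 'v" where
  "hd G d = tl G (rv G d)"

definition uedges :: "('v, 'd) graph \<Rightarrow> 'd set set" where
  "uedges G = (\<lambda>d. {d, rv G d}) ` darts G"

definition ord :: "('v, 'd) graph \<Rightarrow> int" where
  "ord G = int (card (uedges G)) - int (card (verts G))"

definition no_half_loops :: "('v, 'd) graph \<Rightarrow> bool" where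
  "no_half_loops G \<longleftrightarrow> (\<forall>d\<in>darts G. rv G d \<noteq> d)"

definition degree :: "('v, 'd) graph \<Rightarrow> 'v \<Rightarrow> nat" where
  "degree G v = card {d \<in> darts G. tl G d = v}"

definition pruned :: "('v, 'd) graph \<Rightarrow> bool" where
  "pruned G \<longleftrightarrow> (\<forall>v\<in>verts G. degree G v \<ge> 2)"

definition subgraph :: "('v, 'd) graph \<Rightarrow> ('v, 'd) graph \<Rightarrow> bool" where
  "subgraph H G \<longleftrightarrow> is_graph H \<and> verts H \<subseteq> verts G \<and> darts H \<subseteq> darts G
     \<and> (\<forall>d\<in>darts H. tl H d = tl G d \<and> rv H d = rv G d)"

definition proper_subgraph :: "('v, 'd) graph \<Rightarrow> ('v, 'd) graph \<Rightarrow> bool" where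
  "proper_subgraph H G \<longleftrightarrow> subgraph H G \<and> (verts H \<noteq> verts G \<or> darts H \<noteq> darts G)"

definition adj :: "('v, 'd) graph \<Rightarrow> ('v \<times> 'v) set" where
  "adj G = {(tl G d, hd G d) | d. d \<in> darts G}"

definition component :: "('v, 'd) graph \<Rightarrow> 'v \<Rightarrow> ('v, 'd) graph" where
  "component G v =
     (let C = {w. (v, w) \<in> (adj G)\<^sup>*} in
      G\<lparr>verts := C, darts := {d \<in> darts G. tl G d \<in> C}\<rparr>)"

end

theory Submission
  imports Defs
begin

lemma swap2: "a = r b \<Longrightarrow> r a = b \<Longrightarrow> {a, r a} = {b, r b}"
  by (simp add: insert_commute)

lemma pair_card:
  assumes fin: "finite D" and cl: "\<forall>d\<in>D. r d \<in> D \<and> r (r d) = d \<and> r d \<noteq> d"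
  shows "2 * card ((\<lambda>d. {d, r d}) ` D) = card D"
proof -
  let ?C = "(\<lambda>d. {d, r d}) ` D"
  have U: "\<Union>?C = D" using cl by auto
  have f1: "finite ?C" using fin by simp
  have f2: "finite (\<Union>?C)" using U fin by simp
  have c2: "\<forall>c\<in>?C. card c = 2" using cl by auto
  have ov: "{a, r a} = {b, r b}" if "a \<in> D" "b \<in> D" "{a, r a} \<inter> {b, r b} \<noteq> {}" for a b
  proof -
    have "a = b \<or> a = r b \<or> r a = b \<or> r a = r b" using that(3) by blast
    moreover have ra: "r (r a) = a" and rb: "r (r b) = b" using cl that(1,2) by auto
    ultimately show ?thesis
    proof (elim disjE)
      assume "a = b" then show ?thesis by simp
    next
      assume "a = r b" then have "r a = r (r b)" by (rule arg_cong)
      then have "r a = b" using rb by (rule trans)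
      with \<open>a = r b\<close> show ?thesis by (rule swap2)
    next
      assume "r a = b" then have "r (r a) = r b" by (rule arg_cong)
      with ra[symmetric] have "a = r b" by (rule trans)
      then show ?thesis using \<open>r a = b\<close> by (rule swap2)
    next
      assume "r a = r b" then have "r (r a) = r (r b)" by (rule arg_cong)
      with ra[symmetric] have "a = r (r b)" by (rule trans)
      then have "a = b" using rb by (rule trans)
      then show ?thesis by simp
    qed
  qed
  have dj: "c1 \<inter> c2 = {}" if "c1 \<in> ?C" "c2 \<in> ?C" "c1 \<noteq> c2" for c1 c2
  proof -
    from that obtain a b where "a \<in> D" "b \<in> D" "c1 = {a, r a}" "c2 = {b, r b}" by blast
    then show "c1 \<inter> c2 = {}" using ov \<open>c1 \<noteq> c2\<close> by blast
  qed
  have "2 * card ?C = card (\<Union>?C)"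
  proof (rule card_partition[OF f1 f2])
    fix c assume "c \<in> ?C" then show "card c = 2" using c2 by blast
  next
    fix x y assume "x \<in> ?C" "y \<in> ?C" "x \<noteq> y" then show "x \<inter> y = {}" by (rule dj)
  qed
  then show ?thesis using U by simp
qed

lemma deg_sum:
  assumes "finite D" "finite S"
  shows "card {d\<in>D. t d \<in> S} = (\<Sum>v\<in>S. card {d\<in>D. t d = v})"
proof -
  have "{d\<in>D. t d \<in> S} = (\<Union>v\<in>S. {d\<in>D. t d = v})" by auto
  moreover have "card (\<Union>v\<in>S. {d\<in>D. t d = v}) = (\<Sum>v\<in>S. card {d\<in>D. t d = v})"
    by (rule card_UN_disjoint) (use assms in auto)
  ultimately show ?thesis by simp
qed

lemma ord2:
  assumes "finite (darts G)" "\<forall>d\<in>darts G. rv G d \<in> darts G \<and> rv G (rv G d) = d \<and> rv G d \<noteq> d"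
  shows "2 * ord G = int (card (darts G)) - 2 * int (card (verts G))"
proof -
  have "2 * card (uedges G) = card (darts G)"
    unfolding uedges_def by (rule pair_card) (use assms in auto)
  then have "2 * int (card (uedges G)) = int (card (darts G))" by (metis of_nat_mult of_nat_numeral)
  then show ?thesis unfolding ord_def by (simp add: right_diff_distrib)
qed

theorem theorem2p8:
  fixes \<psi>1 \<psi>2 :: "('v, 'd) graph"
  assumes "is_graph \<psi>2" and "finite_graph \<psi>2" and "pruned \<psi>2" and "no_half_loops \<psi>2"
    and "\<forall>v\<in>verts \<psi>2. ord (component \<psi>2 v) > 0"
    and "proper_subgraph \<psi>1 \<psi>2"
  shows "ord \<psi>1 < ord \<psi>2"
proof -
  let ?D = "darts \<psi>2" and ?V = "verts \<psi>2" and ?DH = "darts \<psi>1" and ?VH = "verts \<psi>1"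
  let ?t = "tl \<psi>2" and ?r = "rv \<psi>2"
  define W where "W = ?V - ?VH"
  have gG: "\<forall>d\<in>?D. ?r d \<in> ?D \<and> ?r (?r d) = d \<and> ?r d \<noteq> d" "\<forall>d\<in>?D. ?t d \<in> ?V"
    using assms(1,4) unfolding is_graph_def no_half_loops_def by auto
  have fD: "finite ?D" and fV: "finite ?V" using assms(2) finite_graph_def by auto
  have sub: "?VH \<subseteq> ?V" "?DH \<subseteq> ?D" "\<forall>d\<in>?DH. tl \<psi>1 d = ?t d \<and> rv \<psi>1 d = ?r d"
    and gH: "is_graph \<psi>1"
    using assms(6) unfolding proper_subgraph_def subgraph_def by auto
  have prp: "?VH \<noteq> ?V \<or> ?DH \<noteq> ?D" using assms(6) unfolding proper_subgraph_def by auto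
  have clH: "\<forall>d\<in>?DH. ?r d \<in> ?DH" "\<forall>d\<in>?DH. ?t d \<in> ?VH"
    using gH sub(3) unfolding is_graph_def by auto
  have fDH: "finite ?DH" by (rule finite_subset[OF sub(2) fD])
  have fW: "finite W" using fV W_def by simp
  have oG: "2 * ord \<psi>2 = int (card ?D) - 2 * int (card ?V)" by (rule ord2) (use gG fD in auto)
  have oH: "2 * ord \<psi>1 = int (card ?DH) - 2 * int (card ?VH)"
  proof (rule ord2[OF fDH], intro ballI)
    fix d assume d: "d \<in> ?DH"
    have r1: "rv \<psi>1 d = ?r d" using sub(3) d by blast
    have rd: "?r d \<in> ?DH" using clH d by blast
    have r2: "rv \<psi>1 (?r d) = ?r (?r d)" using sub(3) rd by blast
    have dD: "d \<in> ?D" using sub(2) d by blast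
    show "rv \<psi>1 d \<in> ?DH \<and> rv \<psi>1 (rv \<psi>1 d) = d \<and> rv \<psi>1 d \<noteq> d"
      using r1 r2 rd gG(1) dD by simp
  qed
  have cD: "card (?D - ?DH) = card ?D - card ?DH" by (rule card_Diff_subset[OF fDH sub(2)])
  have cD': "card ?DH \<le> card ?D" by (rule card_mono[OF fD sub(2)])
  have cV: "card W = card ?V - card ?VH" unfolding W_def by (rule card_Diff_subset[OF finite_subset[OF sub(1) fV] sub(1)])
  have cV': "card ?VH \<le> card ?V" by (rule card_mono[OF fV sub(1)])
  define A where "A = {d\<in>?D. ?t d \<in> W}"
  have AS: "A \<subseteq> ?D - ?DH" unfolding A_def W_def using clH by auto
  have cA: "card A = (\<Sum>w\<in>W. degree \<psi>2 w)" unfolding A_def degree_def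
    by (rule deg_sum[OF fD fW])
  have deg2: "\<forall>w\<in>W. degree \<psi>2 w \<ge> 2" using assms(3) unfolding pruned_def W_def by blast
  have sA: "2 * card W \<le> card A" unfolding cA
    using sum_mono[of W "\<lambda>_. 2" "degree \<psi>2"] deg2 by simp
  have key: "card (?D - ?DH) > 2 * card W"
  proof (rule ccontr)
    assume nk: "\<not> ?thesis"
    have fDD: "finite (?D - ?DH)" using fD by simp
    have AE: "A = ?D - ?DH"
    proof (rule ccontr)
      assume "A \<noteq> ?D - ?DH"
      then have "A \<subset> ?D - ?DH" using AS by blast
      then have "card A < card (?D - ?DH)" by (rule psubset_card_mono[OF fDD])
      then show False using nk sA by simp
    qed
    show False
    proof (cases "W = {}")
      case True
      then have "A = {}" unfolding A_def by simp
      then have "?D = ?DH" using AE sub(2) by blast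
      moreover have "?VH = ?V" using True sub(1) unfolding W_def by blast
      ultimately show False using prp by simp
    next
      case False
      then obtain w where wW: "w \<in> W" by blast
      have sumeq: "(\<Sum>w\<in>W. degree \<psi>2 w) = 2 * card W" using nk sA AE cA by simp
      have eqs: "(\<Sum>w\<in>W. (2::nat)) = (\<Sum>w\<in>W. degree \<psi>2 w)" using sumeq by simp
      have dW: "\<forall>w\<in>W. degree \<psi>2 w = 2"
      proof
        fix v assume v: "v \<in> W"
        have "(\<lambda>_. (2::nat)) v = degree \<psi>2 v"
          by (rule sum_mono_inv[OF eqs _ v fW]) (use deg2 in blast)
        then show "degree \<psi>2 v = 2" by simp
      qed
      have clW: "\<forall>d\<in>?D. ?t d \<in> W \<longrightarrow> ?t (?r d) \<in> W"
      proof (intro ballI impI)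
        fix d assume d: "d \<in> ?D" "?t d \<in> W"
        have "?r d \<notin> ?DH"
        proof
          assume "?r d \<in> ?DH"
          then have "?r (?r d) \<in> ?DH" using clH by blast
          then have "d \<in> ?DH" using gG d by simp
          then have "?t d \<in> ?VH" using clH(2) by blast
          then show False using d(2) unfolding W_def by blast
        qed
        moreover have "?r d \<in> ?D" using gG(1) d(1) by blast
        ultimately have "?r d \<in> A" using AE by blast
        then show "?t (?r d) \<in> W" unfolding A_def by simp
      qed
      define C where "C = {x. (w, x) \<in> (adj \<psi>2)\<^sup>*}"
      have CW: "C \<subseteq> W"
      proof
        fix x assume "x \<in> C"
        then have "(w, x) \<in> (adj \<psi>2)\<^sup>*" unfolding C_def by simp
        then show "x \<in> W"
        proof (induction rule: rtrancl_induct)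
          case base show ?case by (rule wW)
        next
          case (step y z)
          then obtain d where "d \<in> ?D" "y = ?t d" "z = hd \<psi>2 d" unfolding adj_def by auto
          then have "?t d \<in> W" using step.IH by simp
          then have "?t (?r d) \<in> W" using clW \<open>d \<in> ?D\<close> by blast
          then show ?case using \<open>z = hd \<psi>2 d\<close> by (simp add: hd_def)
        qed
      qed
      have wV: "w \<in> ?V" using wW W_def by simp
      let ?K = "component \<psi>2 w"
      have K: "verts ?K = C" "darts ?K = {d\<in>?D. ?t d \<in> C}" "rv ?K = ?r"
        unfolding component_def C_def Let_def by simp_all
      have fC: "finite C" using CW fW finite_subset by blast
      have clK: "\<forall>d\<in>darts ?K. rv ?K d \<in> darts ?K \<and> rv ?K (rv ?K d) = d \<and> rv ?K d \<noteq> d"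
      proof
        fix d assume "d \<in> darts ?K"
        then have d: "d \<in> ?D" "?t d \<in> C" using K by auto
        have "(?t d, hd \<psi>2 d) \<in> adj \<psi>2" unfolding adj_def using d by auto
        then have "hd \<psi>2 d \<in> C" using d(2) unfolding C_def by auto
        then show "rv ?K d \<in> darts ?K \<and> rv ?K (rv ?K d) = d \<and> rv ?K d \<noteq> d"
        proof -
          have h: "?t (?r d) \<in> C" using \<open>hd \<psi>2 d \<in> C\<close> hd_def by metis
          have r: "?r d \<in> ?D" "?r (?r d) = d" "?r d \<noteq> d" using gG(1) d(1) by auto
          show ?thesis unfolding K using h r by simp
        qed
      qed
      have "2 * ord ?K = int (card (darts ?K)) - 2 * int (card (verts ?K))"
        by (rule ord2[OF _ clK]) (simp add: K fD)
      moreover have "card (darts ?K) = (\<Sum>v\<in>C. degree \<psi>2 v)"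
        unfolding K degree_def by (rule deg_sum[OF fD fC])
      moreover have "(\<Sum>v\<in>C. degree \<psi>2 v) = (\<Sum>v\<in>C. 2)"
        using dW CW by (intro sum.cong) auto
      moreover have "(\<Sum>v\<in>C. (2::nat)) = 2 * card C" by simp
      ultimately have "ord ?K = 0" using K by simp
      moreover have "ord ?K > 0" using assms(5) wV by blast
      ultimately show False by simp
    qed
  qed
  show ?thesis using oG oH key cD cD' cV cV' by linarith
qed

end
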